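(* Let $s,t\in\mathbb{R}^2$ with $D_{st}>0$, let $P_s>0$, $N_0>0$, $\gamma\in(0,\infty)$, $P_r=\gamma P_s$, and $\alpha\ge 2$. For a relay position $r$ in the interior of the segment $[s,t]$ and a power allocation $(P_{sr},P_{srt},P_{rt})\in[0,\infty)^3$ with $P_{sr}+P_{srt}\le P_s$ and $P_{rt}\le P_r$, define $$R_{sr}=\frac{P_{sr}}{D_{sr}^{\alpha}N_0},\quad R_{rt}=\frac{P_{rt}}{D_{rt}^{\alpha}N_0},\quad R_{srt}=\frac{P_{srt}}{D_{st}^{\alpha}N_0},\qquad R_{st}=R_{srt}+\min(R_{sr},R_{rt}).$$ Then the maximum of $R_{st}$ over all such relay positions and feasible power allocations is attained exactly at the relay position with $$D_{sr}^{*}=\frac{D_{st}}{1+\sqrt[\alpha]{\gamma}},\qquad D_{rt}^{*}=\frac{\sqrt[\alpha]{\gamma}\,D_{st}}{1+\sqrt[\alpha]{\gamma}},$$ the maximal value is $$R_{st}^{*}=\frac{P_s}{(D_{sr}^{*})^{\alpha}N_0}=\frac{\gamma P_s}{(D_{rt}^{*})^{\alpha}N_0},$$ and every power allocation achieving $R^*_{st}$ at this position has $P_{srt}=0$, i.e. all the flow is sent over the path $s\to r\to t$.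
   Context: $D_{uv}$ denotes the Euclidean distance between points $u,v\in\mathbb{R}^2$. The model is the low-SNR (wideband) relay channel with source $s$, relay $r$, destination $t$: the source splits its power between a hyperarc to $\{r,t\}$ (rate limited by the farther node $t$, namely $R_{srt}$) and a hyperarc to $r$ (rate $R_{sr}$), and the relay transmits to $t$ with power $P_{rt}$. *)

theory Defs
  imports "HOL-Analysis.Analysis"
begin

definition rate_st ::
  "real \<Rightarrow> real \<Rightarrow> real^2 \<Rightarrow> real^2 \<Rightarrow> real^2 \<Rightarrow> real \<Rightarrow> real \<Rightarrow> real \<Rightarrow> real" where
  "rate_st \<alpha> N0 s r t Psr Psrt Prt =
     Psrt / (dist s t powr \<alpha> * N0)
     + min (Psr / (dist s r powr \<alpha> * N0)) (Prt / (dist r t powr \<alpha> * N0))"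

definition feasible_alloc :: "real \<Rightarrow> real \<Rightarrow> real \<Rightarrow> real \<Rightarrow> real \<Rightarrow> bool" where
  "feasible_alloc Ps Pr Psr Psrt Prt \<longleftrightarrow>
     0 \<le> Psr \<and> 0 \<le> Psrt \<and> 0 \<le> Prt \<and> Psr + Psrt \<le> Ps \<and> Prt \<le> Pr"

end

theory Submission
  imports Defs
begin


lemma conv_step:
  fixes a b g \<alpha> :: real
  assumes a: "a > 0" and b: "b > 0" and g: "g > 0" and al: "\<alpha> \<ge> 1"
  shows "((a+b)/(1+g)) powr \<alpha> * (1+g) \<le> a powr \<alpha> + g * (b/g) powr \<alpha>"
proof -
  have h1: "(\<lambda>x::real. x powr \<alpha>) ((1 - g/(1+g)) *\<^sub>R a + (g/(1+g)) *\<^sub>R (b/g))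
        \<le> (1 - g/(1+g)) * a powr \<alpha> + (g/(1+g)) * (b/g) powr \<alpha>"
    by (rule convex_onD[OF powr_convex[OF al]]) (use a b g in auto)
  have e1: "1 - g/(1+g) = 1/(1+g)" using g by (simp add: field_simps)
  have h2: "(1 - g/(1+g)) *\<^sub>R a + (g/(1+g)) *\<^sub>R (b/g) = (a+b)/(1+g)"
    using g unfolding e1 by (simp add: add_divide_distrib)
  from h1[unfolded h2] have "((a+b)/(1+g)) powr \<alpha> \<le> 1/(1+g) * a powr \<alpha> + g/(1+g) * (b/g) powr \<alpha>"
    by (simp only: e1)
  hence "((a+b)/(1+g)) powr \<alpha> \<le> (a powr \<alpha> + g * (b/g) powr \<alpha>)/(1+g)"
    by (simp add: add_divide_distrib)
  thus ?thesis using g by (simp add: field_simps)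
qed

lemma key:
  fixes a b g \<alpha> D Ps p q w \<gamma> :: real
  assumes a: "a > 0" and b: "b > 0" and g: "g > 0" and al: "\<alpha> \<ge> 2"
    and D: "D = a + b" and ga: "\<gamma> = g powr \<alpha>" and Ps: "Ps > 0"
    and p: "0 \<le> p" and q: "0 \<le> q" and qp: "q + p \<le> Ps" and w: "0 \<le> w" and wP: "w \<le> \<gamma> * Ps"
  defines "x \<equiv> D/(1+g)"
  shows "p / D powr \<alpha> + min (q / a powr \<alpha>) (w / b powr \<alpha>) \<le> Ps / x powr \<alpha>"
    and "p / D powr \<alpha> + min (q / a powr \<alpha>) (w / b powr \<alpha>) = Ps / x powr \<alpha> \<Longrightarrow> p = 0 \<and> a = x"
proof -
  define A where "A = a powr \<alpha>"
  define B where "B = b powr \<alpha>"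
  define X where "X = x powr \<alpha>"
  define Da where "Da = D powr \<alpha>"
  define m where "m = min (q / A) (w / B)"
  have Ap: "A > 0" "B > 0" using a b by (auto simp: A_def B_def)
  have xp: "x > 0" using a b g by (simp add: x_def D)
  have Xp: "X > 0" using xp by (simp add: X_def)
  have gp: "\<gamma> > 0" using ga g by simp
  have m0: "m \<ge> 0" using q w Ap by (simp add: m_def)
  have mA: "m * A \<le> q" using Ap by (simp add: m_def min_def field_simps split: if_splits)
  have mB: "m * B \<le> w" using Ap by (simp add: m_def min_def field_simps split: if_splits)
  have cv: "X * (1+g) \<le> A + g * (B / \<gamma>)"
  proof -
    have "(b/g) powr \<alpha> = B / \<gamma>" using b g by (simp add: B_def ga powr_divide)
    moreover have "x powr \<alpha> * (1+g) \<le> a powr \<alpha> + g * (b/g) powr \<alpha>"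
      using conv_step[OF a b g, of \<alpha>] al by (simp add: x_def D)
    ultimately show ?thesis by (simp add: X_def A_def)
  qed
  define lam where "lam = 1 / (X * (1+g))"
  define mu where "mu = lam * g / \<gamma>"
  have lp: "lam > 0" using Xp g by (simp add: lam_def)
  have one: "lam * A + mu * B \<ge> 1"
  proof -
    have "lam * A + mu * B = (A + g * (B/\<gamma>)) * lam"
      by (simp add: mu_def algebra_simps)
    also have "\<dots> = (A + g * (B/\<gamma>)) / (X*(1+g))" by (simp add: lam_def)
    finally have "lam * A + mu * B = (A + g * (B/\<gamma>)) / (X*(1+g))" .
    thus ?thesis using cv Xp g by simp
  qed
  have Dx: "D = x * (1+g)" using g by (simp add: x_def)
  have Da: "Da = X * (1+g) powr \<alpha>" using xp g by (simp add: Da_def X_def Dx powr_mult)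
  have gg: "(1+g) powr \<alpha> > (1+g) powr 1" using g al by (subst powr_less_cancel_iff) auto
  have XD: "X*(1+g) < Da" using gg Xp g by (simp add: Da)
  have lD: "lam > 1 / Da" unfolding lam_def
    by (rule divide_strict_left_mono[OF XD]) (use Xp g XD xp in \<open>auto intro!: mult_pos_pos simp: Da_def Dx\<close>)
  have Dap: "Da > 0" using Da Xp g by simp
  have mb: "m \<le> Ps / X - lam * p"
  proof -
    have "m \<le> m * (lam * A + mu * B)" using one m0 by (metis mult_left_mono mult.right_neutral)
    also have "\<dots> = lam * (m*A) + mu * (m*B)" by (simp add: algebra_simps)
    also have "\<dots> \<le> lam * (Ps - p) + mu * (\<gamma> * Ps)"
      apply (rule add_mono; rule mult_left_mono)
      using mA qp mB wP lp g gp by (auto simp: mu_def)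
    also have "\<dots> = lam * (1+g) * Ps - lam * p" using gp by (simp add: mu_def algebra_simps)
    also have "lam * (1+g) = 1 / X" using g by (simp add: lam_def)
    also have "1 / X * Ps = Ps / X" by simp
    finally show ?thesis .
  qed
  have main: "p / Da + m \<le> Ps / X - p * (lam - 1/Da)" using mb by (simp add: algebra_simps)
  have pl: "p * (lam - 1/Da) \<ge> 0" using p lD by simp
  show "p / D powr \<alpha> + min (q / a powr \<alpha>) (w / b powr \<alpha>) \<le> Ps / x powr \<alpha>"
    using main pl by (simp add: Da_def m_def A_def B_def X_def)
  assume eq: "p / D powr \<alpha> + min (q / a powr \<alpha>) (w / b powr \<alpha>) = Ps / x powr \<alpha>"
  hence eq': "p / Da + m = Ps / X" by (simp add: Da_def m_def A_def B_def X_def)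
  have "p * (lam - 1/Da) = 0" using eq' main pl by linarith
  hence p0: "p = 0" using lD by simp
  hence mX: "m = Ps / X" using eq' by simp
  have "a = x"
  proof (rule ccontr)
    assume "a \<noteq> x"
    then consider "a > x" | "a < x" by linarith
    thus False
    proof cases
      case 1
      hence "A > X" using xp al by (simp add: A_def X_def powr_less_mono2)
      hence "m < Ps / X"
        using mA qp p0 Ap Xp Ps m0 by (smt (verit, best) divide_strict_left_mono mult_pos_pos pos_le_divide_eq)
      thus False using mX by simp
    next
      case 2
      hence "b > g * x" using D Dx by (simp add: algebra_simps)
      hence "B > (g*x) powr \<alpha>" using xp g al by (simp add: B_def powr_less_mono2)
      hence BX: "B > \<gamma> * X" using xp g by (simp add: powr_mult ga X_def)
      have "m * B \<le> \<gamma> * Ps" using mB wP by simp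
      hence "m \<le> \<gamma> * Ps / B" using Ap by (simp add: field_simps)
      also have "\<dots> < \<gamma> * Ps / (\<gamma> * X)" using BX gp Ps Xp Ap
        by (intro divide_strict_left_mono) (auto intro!: mult_pos_pos)
      also have "\<dots> = Ps / X" using gp by simp
      finally show False using mX by simp
    qed
  qed
  with p0 show "p = 0 \<and> a = x" by simp
qed


lemma min_div_pos:
  fixes c d N0 :: real assumes "N0 > 0"
  shows "min (c / N0) (d / N0) = min c d / N0"
  using assms by (auto simp: min_def divide_le_cancel)

lemma rate_eq:
  assumes "N0 > 0"
  shows "rate_st \<alpha> N0 s r t Psr Psrt Prt =
    (Psrt / dist s t powr \<alpha> + min (Psr / dist s r powr \<alpha>) (Prt / dist r t powr \<alpha>)) / N0"
proof -
  have "rate_st \<alpha> N0 s r t Psr Psrt Prt = Psrt / dist s t powr \<alpha> / N0 +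
     min (Psr / dist s r powr \<alpha> / N0) (Prt / dist r t powr \<alpha> / N0)"
    by (simp add: rate_st_def divide_divide_eq_left)
  also have "\<dots> = Psrt / dist s t powr \<alpha> / N0 +
     min (Psr / dist s r powr \<alpha>) (Prt / dist r t powr \<alpha>) / N0"
    by (simp only: min_div_pos[OF assms])
  finally show ?thesis by (simp add: add_divide_distrib)
qed

lemma seg_dist:
  fixes s t :: "real^2"
  shows "dist s ((1 - u) *\<^sub>R s + u *\<^sub>R t) = \<bar>u\<bar> * dist s t"
    and "dist ((1 - u) *\<^sub>R s + u *\<^sub>R t) t = \<bar>1 - u\<bar> * dist s t"
proof -
  have "s - ((1 - u) *\<^sub>R s + u *\<^sub>R t) = u *\<^sub>R (s - t)" by (simp add: algebra_simps)
  thus "dist s ((1 - u) *\<^sub>R s + u *\<^sub>R t) = \<bar>u\<bar> * dist s t" by (simp add: dist_norm)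
  have "((1 - u) *\<^sub>R s + u *\<^sub>R t) - t = (1 - u) *\<^sub>R (s - t)" by (simp add: algebra_simps)
  thus "dist ((1 - u) *\<^sub>R s + u *\<^sub>R t) t = \<bar>1 - u\<bar> * dist s t" by (simp add: dist_norm)
qed


theorem lemma2:
  fixes s t :: "real^2" and Ps Pr N0 \<gamma> \<alpha> :: real
  assumes "dist s t > 0" and "Ps > 0" and "N0 > 0" and "\<gamma> > 0"
    and "Pr = \<gamma> * Ps" and "\<alpha> \<ge> 2"
  defines "Dsr \<equiv> dist s t / (1 + \<gamma> powr (1/\<alpha>))"
    and "Drt \<equiv> \<gamma> powr (1/\<alpha>) * dist s t / (1 + \<gamma> powr (1/\<alpha>))"
    and "Rstar \<equiv> Ps / ((dist s t / (1 + \<gamma> powr (1/\<alpha>))) powr \<alpha> * N0)"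
  shows "Rstar = \<gamma> * Ps / (Drt powr \<alpha> * N0) \<and>
    (\<exists>rs. rs \<in> open_segment s t \<and> dist s rs = Dsr \<and> dist rs t = Drt \<and>
       (\<forall>r \<in> open_segment s t. \<forall>Psr Psrt Prt. feasible_alloc Ps Pr Psr Psrt Prt \<longrightarrow>
           rate_st \<alpha> N0 s r t Psr Psrt Prt \<le> Rstar) \<and>
       (\<exists>Psr Psrt Prt. feasible_alloc Ps Pr Psr Psrt Prt \<and>
           rate_st \<alpha> N0 s rs t Psr Psrt Prt = Rstar) \<and>
       (\<forall>r \<in> open_segment s t. \<forall>Psr Psrt Prt. feasible_alloc Ps Pr Psr Psrt Prt \<longrightarrow>
           rate_st \<alpha> N0 s r t Psr Psrt Prt = Rstar \<longrightarrow> r = rs \<and> Psrt = 0))"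
  
proof -
  define D where "D = dist s t"
  define g where "g = \<gamma> powr (1/\<alpha>)"
  define x where "x = D / (1+g)"
  have Dp: "D > 0" using assms(1) by (simp add: D_def)
  have gp: "g > 0" using assms(4) by (simp add: g_def)
  have al0: "\<alpha> \<noteq> 0" using assms(6) by simp
  have ga: "g powr \<alpha> = \<gamma>" using assms(4) al0 by (simp add: g_def powr_powr)
  have xp: "x > 0" using Dp gp by (simp add: x_def)
  have Dsr: "Dsr = x" by (simp add: Dsr_def x_def D_def g_def)
  have Drt: "Drt = g * x" by (simp add: Drt_def x_def D_def g_def)
  have Rs: "Rstar = Ps / (x powr \<alpha> * N0)" by (simp add: Rstar_def x_def D_def g_def)
  have Drta: "Drt powr \<alpha> = \<gamma> * x powr \<alpha>" using gp xp by (simp add: Drt powr_mult ga)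
  have part1: "Rstar = \<gamma> * Ps / (Drt powr \<alpha> * N0)"
    using assms(4) by (simp add: Rs Drta)
  define u0 where "u0 = 1/(1+g)"
  define rs where "rs = (1 - u0) *\<^sub>R s + u0 *\<^sub>R t"
  have u0: "0 < u0" "u0 < 1" using gp by (auto simp: u0_def)
  have st: "s \<noteq> t" using assms(1) by auto
  have rs_in: "rs \<in> open_segment s t" unfolding in_segment rs_def using st u0 by auto
  have d1: "dist s rs = x" using seg_dist(1)[where s=s and t=t and u=u0] u0 by (simp add: rs_def x_def u0_def D_def)
  have d2: "dist rs t = g * x"
  proof -
    have "1 - u0 = g/(1+g)" using gp by (simp add: u0_def field_simps)
    thus ?thesis using seg_dist(2)[where s=s and t=t and u=u0] u0 gp by (simp add: rs_def x_def D_def)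
  qed
  have gen: "rate_st \<alpha> N0 s r t Psr Psrt Prt \<le> Rstar \<and>
      (rate_st \<alpha> N0 s r t Psr Psrt Prt = Rstar \<longrightarrow> r = rs \<and> Psrt = 0)"
    if r: "r \<in> open_segment s t" and f: "feasible_alloc Ps Pr Psr Psrt Prt" for r Psr Psrt Prt
  proof -
    obtain u where u: "0 < u" "u < 1" and ru: "r = (1 - u) *\<^sub>R s + u *\<^sub>R t"
      using r unfolding in_segment by auto
    define a where "a = u * D"
    define b where "b = (1 - u) * D"
    have da: "dist s r = a" using seg_dist(1)[where s=s and t=t and u=u] u by (simp add: ru a_def D_def)
    have db: "dist r t = b" using seg_dist(2)[where s=s and t=t and u=u] u by (simp add: ru b_def D_def)
    have ap: "a > 0" "b > 0" using u Dp by (auto simp: a_def b_def)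
    have Dab: "D = a + b" by (simp add: a_def b_def algebra_simps)
    have fe: "0 \<le> Psr" "0 \<le> Psrt" "0 \<le> Prt" "Psr + Psrt \<le> Ps" "Prt \<le> \<gamma> * Ps"
      using f assms(5) by (auto simp: feasible_alloc_def)
    note K = key[OF ap(1) ap(2) gp assms(6) Dab ga[symmetric] assms(2) fe(2) fe(1) fe(4) fe(3) fe(5)]
    have xD: "D / (1+g) = x" by (simp add: x_def)
    have r1: "rate_st \<alpha> N0 s r t Psr Psrt Prt =
       (Psrt / D powr \<alpha> + min (Psr / a powr \<alpha>) (Prt / b powr \<alpha>)) / N0"
      using rate_eq[OF assms(3)] da db by (simp add: D_def)
    have RsN: "Rstar = Ps / x powr \<alpha> / N0" by (simp add: Rs divide_divide_eq_left)
    have le: "Psrt / D powr \<alpha> + min (Psr / a powr \<alpha>) (Prt / b powr \<alpha>) \<le> Ps / x powr \<alpha>"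
      using K(1) by (simp only: xD)
    show ?thesis
    proof
      show "rate_st \<alpha> N0 s r t Psr Psrt Prt \<le> Rstar"
        unfolding r1 RsN using le assms(3) by (intro divide_right_mono) auto
      show "rate_st \<alpha> N0 s r t Psr Psrt Prt = Rstar \<longrightarrow> r = rs \<and> Psrt = 0"
      proof
        assume "rate_st \<alpha> N0 s r t Psr Psrt Prt = Rstar"
        hence "(Psrt / D powr \<alpha> + min (Psr / a powr \<alpha>) (Prt / b powr \<alpha>)) / N0 = Ps / x powr \<alpha> / N0"
          unfolding r1 RsN .
        hence "Psrt / D powr \<alpha> + min (Psr / a powr \<alpha>) (Prt / b powr \<alpha>) = Ps / x powr \<alpha>"
          using assms(3) by (metis divide_cancel_right less_irrefl)
        hence "Psrt = 0 \<and> a = D / (1+g)" using K(2) by (simp only: xD)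
        moreover have "u = u0"
        proof -
          have "u * D = (1/(1+g)) * D" using \<open>Psrt = 0 \<and> a = D / (1+g)\<close> by (simp add: a_def)
          thus ?thesis using Dp unfolding u0_def by (metis mult_right_cancel less_irrefl)
        qed
        ultimately show "r = rs \<and> Psrt = 0" by (simp add: ru rs_def)
      qed
    qed
  qed
  have attain: "feasible_alloc Ps Pr Ps 0 Pr \<and> rate_st \<alpha> N0 s rs t Ps 0 Pr = Rstar"
  proof
    show "feasible_alloc Ps Pr Ps 0 Pr" using assms(2,4,5) by (simp add: feasible_alloc_def)
    have "rate_st \<alpha> N0 s rs t Ps 0 Pr = min (Ps / (x powr \<alpha> * N0)) (\<gamma> * Ps / (\<gamma> * x powr \<alpha> * N0))"
      using gp xp by (simp add: rate_st_def d1 d2 assms(5) powr_mult ga)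
    also have "\<dots> = Rstar" using assms(4) by (simp add: Rs)
    finally show "rate_st \<alpha> N0 s rs t Ps 0 Pr = Rstar" .
  qed
  show ?thesis
    using part1 rs_in d1 d2 Dsr Drt gen attain by blast
qed

end
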